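(* Let $n \ge 2$ and $\Sigma = \{1, 2, \dots, n\}$. Define the word $w \in \Sigma^{2n}$ by $w[1]w[2]w[3] = 1\,2\,1$; for each $x \in \{2, 3, \dots, n-1\}$, $w[2x] = x+1$ and $w[2x+1] = x$; and $w[2n] = n$. Then $TG(w)$ is a temporal path graph, i.e. its underlying graph is a path on the $n$ vertices $v_1, \dots, v_n$.
   Context: $w[i]$ denotes the $i$-th letter of $w$, $w[i,j]$ the factor $w[i]\cdots w[j]$, $\mathrm{letters}(u)$ the set of symbols of $u$, and $\pi_{\mathcal S}(w)$ the subsequence of $w$ of all occurrences of symbols in $\mathcal S$. Symbols $x,y$ alternate in $w$ if $\pi_{\{x,y\}}(w) \in \{(xy)^k, (xy)^kx, (yx)^k, (yx)^ky : k \ge 0\}$. $G(w)$ has vertex set $\{v_1,\dots,v_n\}$ and undirected edge $(v_x,v_y)$ iff $x\neq y$ alternate in $w$. Start points: $S_1=1$, and $S_i$ is the least index $j>S_{i-1}$ with $w[j] \in \mathrm{letters}(w[S_{i-1},j-1])$; $S_1<\dots<S_T$ are all start points. The $t$-th timestep factor is $w[S_t,S_{t+1}-1]$ ($t<T$) or $w[S_T,|w|]$ ($t=T$). $TG(w)=(V,E_1,\dots,E_T)$ with $E_t$ the set of edges $(v_x,v_y)$ of $G(w)$ with $x$ or $y$ occurring in the $t$-th timestep factor; its underlying graph is $(V,\bigcup_t E_t)$. *)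

theory Defs
  imports Main
begin

text \<open>Words are lists of natural numbers (symbols); positions are 1-based as in
the paper: w[i] is \<open>w ! (i - 1)\<close>. Vertex v_x is identified with the symbol x,
and an undirected edge (v_x, v_y) with the two-element set {x, y}.\<close>

definition sym_at :: "nat list \<Rightarrow> nat \<Rightarrow> nat" where
  "sym_at w i = w ! (i - 1)"

definition factor :: "nat list \<Rightarrow> nat \<Rightarrow> nat \<Rightarrow> nat list" where
  "factor w i j = map (sym_at w) [i..<Suc j]"

definition letters :: "nat list \<Rightarrow> nat set" where
  "letters u = set u"

definition proj :: "nat set \<Rightarrow> nat list \<Rightarrow> nat list" where
  "proj S w = filter (\<lambda>c. c \<in> S) w"

definition alternate :: "nat list \<Rightarrow> nat \<Rightarrow> nat \<Rightarrow> bool" where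
  "alternate w x y \<longleftrightarrow> (\<exists>k. proj {x, y} w \<in>
     {concat (replicate k [x, y]), concat (replicate k [x, y]) @ [x],
      concat (replicate k [y, x]), concat (replicate k [y, x]) @ [y]})"

definition G_edges :: "nat \<Rightarrow> nat list \<Rightarrow> nat set set" where
  "G_edges n w = {{x, y} | x y. x \<in> {1..n} \<and> y \<in> {1..n} \<and> x \<noteq> y \<and> alternate w x y}"

definition is_next_start :: "nat list \<Rightarrow> nat \<Rightarrow> nat \<Rightarrow> bool" where
  "is_next_start w s j \<longleftrightarrow> s < j \<and> j \<le> length w \<and>
     sym_at w j \<in> letters (factor w s (j - 1)) \<and>
     (\<forall>j'. s < j' \<and> j' < j \<longrightarrow> sym_at w j' \<notin> letters (factor w s (j' - 1)))"

inductive_set start_points :: "nat list \<Rightarrow> nat set" for w where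
  init: "1 \<le> length w \<Longrightarrow> 1 \<in> start_points w"
| step: "s \<in> start_points w \<Longrightarrow> is_next_start w s j \<Longrightarrow> j \<in> start_points w"

definition ts_end :: "nat list \<Rightarrow> nat \<Rightarrow> nat" where
  "ts_end w s = (if \<exists>j. is_next_start w s j then (THE j. is_next_start w s j) - 1 else length w)"

definition ts_factor :: "nat list \<Rightarrow> nat \<Rightarrow> nat list" where
  "ts_factor w s = factor w s (ts_end w s)"

definition TG_edges :: "nat \<Rightarrow> nat list \<Rightarrow> nat \<Rightarrow> nat set set" where
  "TG_edges n w s = {e \<in> G_edges n w. \<exists>x \<in> e. x \<in> letters (ts_factor w s)}"

definition TG :: "nat \<Rightarrow> nat list \<Rightarrow> nat set set list" where
  "TG n w = map (TG_edges n w) (sorted_list_of_set (start_points w))"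

definition underlying_edges :: "nat \<Rightarrow> nat list \<Rightarrow> nat set set" where
  "underlying_edges n w = \<Union> (set (TG n w))"

definition is_path_graph :: "'a set \<Rightarrow> 'a set set \<Rightarrow> bool" where
  "is_path_graph V E \<longleftrightarrow> finite V \<and>
     (\<exists>f. bij_betw f {1..card V} V \<and> E = {{f i, f (Suc i)} | i. 1 \<le> i \<and> i < card V})"

definition temporal_path_graph :: "nat \<Rightarrow> nat list \<Rightarrow> bool" where
  "temporal_path_graph n w \<longleftrightarrow> is_path_graph {1..n} (underlying_edges n w)"

end

theory Submission
  imports Defs
begin

definition val :: "nat \<Rightarrow> nat \<Rightarrow> nat" where
  "val n i = (if i = 0 then 1 else if odd i then min ((i+1) div 2 + 1) n else i div 2)"

definition occ :: "nat \<Rightarrow> nat \<Rightarrow> nat set" where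
  "occ n k = (if k = 1 then {0,2} else if k < n then {2*k-3, 2*k} else {2*n-3, 2*n-1})"

lemma val_even: "val n (2*m) = (if m = 0 then 1 else m)"
  unfolding val_def by auto

lemma val_odd: "val n (2*m+1) = min (m+2) n"
  unfolding val_def by auto

lemma val_occ:
  assumes "n \<ge> 2" "1 \<le> k" "k \<le> n" "i < 2*n"
  shows "val n i = k \<longleftrightarrow> i \<in> occ n k"
proof -
  obtain m where "i = 2*m \<or> i = 2*m+1" by (metis oddE evenE)
  then show ?thesis
  proof
    assume i: "i = 2*m"
    show ?thesis using assms unfolding i val_even occ_def by auto presburger+
  next
    assume i: "i = 2*m+1"
    show ?thesis using assms unfolding i val_odd occ_def by auto presburger+
  qed
qed

lemma w_val:
  fixes n :: nat and w :: "nat list"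
  assumes "n \<ge> 2"
    and "length w = 2 * n"
    and "sym_at w 1 = 1" and "sym_at w 2 = 2" and "sym_at w 3 = 1"
    and "\<forall>x \<in> {2..n - 1}. sym_at w (2 * x) = x + 1 \<and> sym_at w (2 * x + 1) = x"
    and "sym_at w (2 * n) = n"
  shows "w = map (val n) [0..<2*n]"
proof (rule nth_equalityI)
  show "length w = length (map (val n) [0..<2*n])" using assms by simp
  fix i assume "i < length w"
  hence i: "i < 2*n" using assms by simp
  have s: "w ! i = sym_at w (i+1)" by (simp add: sym_at_def)
  show "w ! i = map (val n) [0..<2*n] ! i"
  proof -
    have "sym_at w (i+1) = val n i"
    proof (cases "i \<le> 2")
      case True
      then consider "i = 0" | "i = 1" | "i = 2" by linarith
      then show ?thesis
      proof cases
        case 1 then show ?thesis using assms(3) by (simp add: val_def)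
      next
        case 2 then show ?thesis using assms(1,4) by (simp add: val_def numeral_2_eq_2)
      next
        case 3 then show ?thesis using assms(5) by (simp add: val_def)
      qed
    next
      case False
      show ?thesis
      proof (cases "odd i")
        case True
        then obtain m where m: "i = 2*m+1" by (auto elim: oddE)
        define x where "x = m + 1"
        have x: "i = 2*x - 1" "x \<ge> 2" using m False unfolding x_def by auto
        show ?thesis
        proof (cases "x = n")
          case True
          then show ?thesis using x assms(1,7) by (auto simp: val_def)
        next
          case False
          hence "x \<le> n - 1" using x i by linarith
          hence "sym_at w (2*x) = x + 1" using assms(6) x by auto
          moreover have "i + 1 = 2*x" using x by linarith
          moreover have "val n i = x + 1" using x False \<open>x \<le> n - 1\<close> True
            by (auto simp: val_def)
          ultimately show ?thesis by simp
        qed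
      next
        case True2: False
        then obtain x where x: "i = 2*x" by (auto elim: evenE)
        hence "x \<ge> 2" "x \<le> n - 1" using False i by linarith+
        hence "sym_at w (2*x+1) = x" using assms(6) by auto
        moreover have "val n i = x" using x \<open>x \<ge> 2\<close> by (auto simp: val_def)
        ultimately show ?thesis using x by simp
      qed
    qed
    thus ?thesis using s i by simp
  qed
qed

lemma filt4:
  assumes "a < b" "b < c" "c < d" "d < m" "\<forall>i<m. P i \<longleftrightarrow> i \<in> {a,b,c,d}"
  shows "filter P [0..<m] = [a,b,c,d]"
proof (rule sorted_distinct_set_unique)
  show "set (filter P [0..<m]) = set [a,b,c,d]" using assms by auto
qed (use assms in \<open>auto intro: sorted_wrt_filter\<close>)

lemma proj4:
  assumes "a < b" "b < c" "c < d" "d < 2*n"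
    "\<forall>i<2*n. val n i \<in> {x,y} \<longleftrightarrow> i \<in> {a,b,c,d}"
  shows "proj {x,y} (map (val n) [0..<2*n]) = [val n a, val n b, val n c, val n d]"
proof -
  have "proj {x,y} (map (val n) [0..<2*n]) = map (val n) (filter (\<lambda>i. val n i \<in> {x,y}) [0..<2*n])"
    unfolding proj_def filter_map by (simp add: comp_def)
  also have "filter (\<lambda>i. val n i \<in> {x,y}) [0..<2*n] = [a,b,c,d]"
    by (rule filt4) (use assms in auto)
  finally show ?thesis by simp
qed

lemma pos_set:
  assumes "n \<ge> 2" "1 \<le> x" "x \<le> n" "1 \<le> y" "y \<le> n"
  shows "\<forall>i<2*n. val n i \<in> {x,y} \<longleftrightarrow> i \<in> occ n x \<union> occ n y"
  using val_occ[OF assms(1,2,3)] val_occ[OF assms(1,4,5)] by auto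

lemma alt_len:
  assumes "x \<noteq> y"
  shows "\<not> alternate [x,x,y,y] x y"
proof
  assume "alternate [x,x,y,y] x y"
  then obtain k where k: "[x,x,y,y] \<in> {concat (replicate k [x, y]), concat (replicate k [x, y]) @ [x],
      concat (replicate k [y, x]), concat (replicate k [y, x]) @ [y]}"
    unfolding alternate_def proj_def by auto
  have l: "length (concat (replicate k [a, b])) = 2*k" for a b :: nat
    by (induction k) auto
  from k have "k = 2" using l[of x y] l[of y x] 
    by (auto dest!: arg_cong[where f=length])
  with k assms show False by (auto simp: numeral_2_eq_2)
qed

lemma alt_yes: "alternate [x,y,x,y] x y"
  unfolding alternate_def proj_def
  by (rule exI[of _ 2]) (auto simp: numeral_2_eq_2)

lemma alt_via:
  assumes "proj {x,y} w = L" "set L \<subseteq> {x,y}"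
  shows "alternate w x y = alternate L x y"
proof -
  have "proj {x,y} L = L" using assms(2) unfolding proj_def by (auto simp: filter_id_conv)
  thus ?thesis using assms(1) unfolding alternate_def by simp
qed

lemma alt_char:
  assumes n: "n \<ge> 2" and xy: "1 \<le> x" "x < y" "y \<le> n"
  shows "alternate (map (val n) [0..<2*n]) x y \<longleftrightarrow> y = Suc x"
proof -
  have P: "\<forall>i<2*n. val n i \<in> {x,y} \<longleftrightarrow> i \<in> occ n x \<union> occ n y"
    by (rule pos_set) (use assms in auto)
  have V: "\<And>i k. 1 \<le> k \<Longrightarrow> k \<le> n \<Longrightarrow> i < 2*n \<Longrightarrow> i \<in> occ n k \<Longrightarrow> val n i = k"
    using val_occ n by blast
  show ?thesis
  proof (cases "y = Suc x")
    case True
    show ?thesis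
    proof -
      have "\<exists>a b c d. a < b \<and> b < c \<and> c < d \<and> d < 2*n \<and> occ n x \<union> occ n y = {a,b,c,d}
              \<and> a \<in> occ n x \<and> c \<in> occ n x \<and> b \<in> occ n y \<and> d \<in> occ n y"
      proof (cases "x = 1")
        case x1: True
        show ?thesis
        proof (cases "n = 2")
          case True
          thus ?thesis using x1 \<open>y = Suc x\<close> by (intro exI[of _ 0] exI[of _ 1] exI[of _ 2] exI[of _ 3]) (auto simp: occ_def)
        next
          case False
          thus ?thesis using x1 \<open>y = Suc x\<close> n by (intro exI[of _ 0] exI[of _ 1] exI[of _ 2] exI[of _ 4]) (auto simp: occ_def)
        qed
      next
        case x1: False
        show ?thesis
        proof (cases "y = n")
          case True
          thus ?thesis using x1 \<open>y = Suc x\<close> xy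
            by (intro exI[of _ "2*x-3"] exI[of _ "2*x-1"] exI[of _ "2*x"] exI[of _ "2*x+1"]) (auto simp: occ_def)
        next
          case False
          thus ?thesis using x1 \<open>y = Suc x\<close> xy
            by (intro exI[of _ "2*x-3"] exI[of _ "2*x-1"] exI[of _ "2*x"] exI[of _ "2*x+2"]) (auto simp: occ_def)
        qed
      qed
      then obtain a b c d where abcd: "a < b" "b < c" "c < d" "d < 2*n" "occ n x \<union> occ n y = {a,b,c,d}"
        "a \<in> occ n x" "c \<in> occ n x" "b \<in> occ n y" "d \<in> occ n y" by blast
      have "proj {x,y} (map (val n) [0..<2*n]) = [val n a, val n b, val n c, val n d]"
        by (rule proj4) (use abcd P in auto)
      also have "\<dots> = [x,y,x,y]"
      proof -
        have "val n a = x" "val n c = x" by (rule V; use abcd xy in auto)+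
        moreover have "val n b = y" "val n d = y" by (rule V; use abcd xy in auto)+
        ultimately show ?thesis by simp
      qed
      finally have "alternate (map (val n) [0..<2*n]) x y = alternate [x,y,x,y] x y"
        by (rule alt_via) auto
      thus ?thesis using alt_yes True by simp
    qed
  next
    case False
    have "\<exists>a b c d. a < b \<and> b < c \<and> c < d \<and> d < 2*n \<and> occ n x \<union> occ n y = {a,b,c,d}
              \<and> a \<in> occ n x \<and> b \<in> occ n x \<and> c \<in> occ n y \<and> d \<in> occ n y"
    proof (cases "x = 1")
      case x1: True
      show ?thesis
      proof (cases "y = n")
        case True
        thus ?thesis using x1 False xy by (intro exI[of _ 0] exI[of _ 2] exI[of _ "2*n-3"] exI[of _ "2*n-1"]) (auto simp: occ_def)
      next
        case F2: False
        thus ?thesis using x1 False xy by (intro exI[of _ 0] exI[of _ 2] exI[of _ "2*y-3"] exI[of _ "2*y"]) (auto simp: occ_def)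
      qed
    next
      case x1: False
      show ?thesis
      proof (cases "y = n")
        case True
        thus ?thesis using x1 False xy by (intro exI[of _ "2*x-3"] exI[of _ "2*x"] exI[of _ "2*n-3"] exI[of _ "2*n-1"]) (auto simp: occ_def)
      next
        case F2: False
        thus ?thesis using x1 False xy by (intro exI[of _ "2*x-3"] exI[of _ "2*x"] exI[of _ "2*y-3"] exI[of _ "2*y"]) (auto simp: occ_def)
      qed
    qed
    then obtain a b c d where abcd: "a < b" "b < c" "c < d" "d < 2*n" "occ n x \<union> occ n y = {a,b,c,d}"
      "a \<in> occ n x" "b \<in> occ n x" "c \<in> occ n y" "d \<in> occ n y" by blast
    have "proj {x,y} (map (val n) [0..<2*n]) = [val n a, val n b, val n c, val n d]"
      by (rule proj4) (use abcd P in auto)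
    also have "\<dots> = [x,x,y,y]"
    proof -
      have "val n a = x" "val n b = x" by (rule V; use abcd xy in auto)+
      moreover have "val n c = y" "val n d = y" by (rule V; use abcd xy in auto)+
      ultimately show ?thesis by simp
    qed
    finally have "alternate (map (val n) [0..<2*n]) x y = alternate [x,x,y,y] x y"
      by (rule alt_via) auto
    thus ?thesis using alt_len xy False by auto
  qed
qed

lemma next_unique:
  assumes "is_next_start w s j" "is_next_start w s j'"
  shows "j = j'"
proof (rule ccontr)
  assume "j \<noteq> j'"
  then have "j < j' \<or> j' < j" by arith
  then show False using assms unfolding is_next_start_def by blast
qed

lemma ts_end_next: "is_next_start w s j \<Longrightarrow> ts_end w s = j - 1"
  unfolding ts_end_def using next_unique
  by (metis (mono_tags, lifting) theI)

lemma ts_end_none: "\<not> (\<exists>j. is_next_start w s j) \<Longrightarrow> ts_end w s = length w"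
  unfolding ts_end_def by auto

lemma sp_bound: "s \<in> start_points w \<Longrightarrow> 1 \<le> s \<and> s \<le> length w"
  by (induction rule: start_points.induct) (auto simp: is_next_start_def)

lemma sp_finite: "finite (start_points w)"
  by (rule finite_subset[of _ "{1..length w}"]) (auto dest: sp_bound)

lemma cover:
  "s \<in> start_points w \<Longrightarrow> s \<le> i \<Longrightarrow> i \<le> length w \<Longrightarrow>
   \<exists>s'\<in>start_points w. s' \<le> i \<and> i \<le> ts_end w s'"
proof (induction "length w - s" arbitrary: s rule: less_induct)
  case less
  show ?case
  proof (cases "\<exists>j. is_next_start w s j")
    case True
    then obtain j where j: "is_next_start w s j" by blast
    show ?thesis
    proof (cases "i \<le> j - 1")
      case True
      then show ?thesis using less.prems ts_end_next[OF j] by auto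
    next
      case False
      have "j \<in> start_points w" using less.prems(1) j by (rule start_points.step)
      moreover have "length w - j < length w - s" "j \<le> i" using j False unfolding is_next_start_def by auto
      ultimately show ?thesis using less.hyps less.prems by blast
    qed
  next
    case False
    then show ?thesis using less.prems ts_end_none[OF False] by auto
  qed
qed

lemma in_factor: "s \<le> i \<Longrightarrow> i \<le> e \<Longrightarrow> sym_at w i \<in> letters (factor w s e)"
proof -
  assume "s \<le> i" "i \<le> e"
  hence "s \<le> i \<and> i < Suc e" by linarith
  hence "i \<in> set [s..<Suc e]" by (simp only: set_upt atLeastLessThan_iff)
  thus ?thesis unfolding letters_def factor_def by (simp only: set_map) (rule imageI)
qed

lemma alt_sym: "alternate w x y \<Longrightarrow> alternate w y x"
  unfolding alternate_def by (auto simp: insert_commute)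


lemma letter_pos:
  assumes "n \<ge> 2" "1 \<le> x" "x \<le> n"
  shows "\<exists>i<2*n. val n i = x"
proof -
  have "\<exists>i<2*n. i \<in> occ n x"
  proof (cases "x = 1")
    case True then show ?thesis using assms by (intro exI[of _ 0]) (auto simp: occ_def)
  next
    case F: False
    show ?thesis
    proof (cases "x < n")
      case True then show ?thesis using assms F by (intro exI[of _ "2*x"]) (auto simp: occ_def)
    next
      case False then show ?thesis using assms F by (intro exI[of _ "2*n-1"]) (auto simp: occ_def)
    qed
  qed
  then show ?thesis using val_occ[OF assms] by blast
qed

theorem lemma13:
  fixes n :: nat and w :: "nat list"
  assumes "n \<ge> 2"
    and "length w = 2 * n"
    and "sym_at w 1 = 1" and "sym_at w 2 = 2" and "sym_at w 3 = 1"
    and "\<forall>x \<in> {2..n - 1}. sym_at w (2 * x) = x + 1 \<and> sym_at w (2 * x + 1) = x"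
    and "sym_at w (2 * n) = n"
  shows "temporal_path_graph n w"
proof -
  have W: "w = map (val n) [0..<2*n]" by (rule w_val[OF assms])
  have n: "n \<ge> 2" by (rule assms(1))
  have altc: "alternate w x y \<longleftrightarrow> y = Suc x" if "1 \<le> x" "x < y" "y \<le> n" for x y
    using alt_char[OF n that] W by simp
  have G: "G_edges n w = {{i, Suc i} | i. 1 \<le> i \<and> i < n}"
  proof
    show "G_edges n w \<subseteq> {{i, Suc i} | i. 1 \<le> i \<and> i < n}"
    proof
      fix e assume "e \<in> G_edges n w"
      then obtain x y where e: "e = {x,y}" "x \<in> {1..n}" "y \<in> {1..n}" "x \<noteq> y" "alternate w x y"
        unfolding G_edges_def by blast
      show "e \<in> {{i, Suc i} | i. 1 \<le> i \<and> i < n}"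
      proof (cases "x < y")
        case True
        then have "y = Suc x" using altc e by auto
        then show ?thesis using e by auto
      next
        case False
        then have "y < x" using e by auto
        moreover have "alternate w y x" using e alt_sym by blast
        ultimately have "x = Suc y" using altc e by auto
        then show ?thesis using e by (auto simp: insert_commute)
      qed
    qed
  next
    show "{{i, Suc i} | i. 1 \<le> i \<and> i < n} \<subseteq> G_edges n w"
    proof
      fix e assume "e \<in> {{i, Suc i} | i. 1 \<le> i \<and> i < n}"
      then obtain i where i: "e = {i, Suc i}" "1 \<le> i" "i < n" by blast
      have "alternate w i (Suc i)" using altc i by auto
      then show "e \<in> G_edges n w" unfolding G_edges_def using i by force
    qed
  qed
  have U: "underlying_edges n w = G_edges n w"
  proof
    show "underlying_edges n w \<subseteq> G_edges n w"
      unfolding underlying_edges_def TG_def TG_edges_def by auto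
  next
    show "G_edges n w \<subseteq> underlying_edges n w"
    proof
      fix e assume eG: "e \<in> G_edges n w"
      then obtain x y where e: "e = {x,y}" "x \<in> {1..n}"
        unfolding G_edges_def by blast
      obtain i where i: "i < 2*n" "val n i = x" using letter_pos[OF n] e by auto
      have sx: "sym_at w (Suc i) = x" using i W by (simp add: sym_at_def)
      have "1 \<in> start_points w" using assms(2) n by (intro start_points.init) simp
      then obtain s where s: "s \<in> start_points w" "s \<le> Suc i" "Suc i \<le> ts_end w s"
        using cover[of 1 w "Suc i"] i assms(2) by auto
      have "x \<in> letters (ts_factor w s)"
        unfolding ts_factor_def using in_factor[OF s(2,3), of w] sx by simp
      then have "e \<in> TG_edges n w s" unfolding TG_edges_def using eG e by auto
      moreover have "s \<in> set (sorted_list_of_set (start_points w))" using s sp_finite by simp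
      ultimately show "e \<in> underlying_edges n w"
        unfolding underlying_edges_def TG_def by auto
    qed
  qed
  show ?thesis
    unfolding temporal_path_graph_def is_path_graph_def U G
  proof (intro conjI exI[of _ id])
    show "finite {1..n}" by simp
    show "bij_betw id {1..card {1..n}} {1..n}" by simp
    show "{{i, Suc i} |i. 1 \<le> i \<and> i < n} = {{id i, id (Suc i)} |i. 1 \<le> i \<and> i < card {1..n}}"
      by simp
  qed
qed

end
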